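(* Let $r\geqslant 3$ be an odd integer and let $\Gamma\cong\mathbb{Z}_{2r}\oplus\mathbb{Z}_2\oplus\mathbb{Z}_4$. Then there exists an $\mathrm{MRS}_\Gamma(r,8;2)$ in which every row sum and every column sum equals $0_\Gamma$.
   Context: For an abelian group $\Gamma$ of order $abc$, an $\mathrm{MRS}_\Gamma(a,b;c)$ is a collection of $c$ arrays of size $a\times b$ whose entries are the elements of $\Gamma$, each appearing exactly once and in a unique array, such that there are $\omega,\delta\in\Gamma$ with every row sum (in every array) equal to $\omega$ and every column sum (in every array) equal to $\delta$. *)

theory Defs
  imports "HOL-Algebra.Elementary_Groups" "HOL-Algebra.FiniteProduct"
begin

text \<open>The group operation of G
  (written multiplicatively in HOL-Algebra) plays the role of the addition of the abelian group.\<close>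
definition MRS :: "('g, 'm) monoid_scheme \<Rightarrow> nat \<Rightarrow> nat \<Rightarrow> nat
    \<Rightarrow> (nat \<Rightarrow> nat \<Rightarrow> nat \<Rightarrow> 'g) \<Rightarrow> 'g \<Rightarrow> 'g \<Rightarrow> bool" where
  "MRS G a b c A \<omega> \<delta> \<longleftrightarrow>
     bij_betw (\<lambda>(k, i, j). A k i j) ({..<c} \<times> {..<a} \<times> {..<b}) (carrier G) \<and>
     \<omega> \<in> carrier G \<and> \<delta> \<in> carrier G \<and>
     (\<forall>k<c. \<forall>i<a. finprod G (\<lambda>j. A k i j) {..<b} = \<omega>) \<and>
     (\<forall>k<c. \<forall>j<b. finprod G (\<lambda>i. A k i j) {..<a} = \<delta>)"

end

theory Submission
  imports Defs
begin

lemma hom_finprod_lessThan: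
  assumes G: "comm_group G" and H: "comm_group H" and h: "h \<in> hom G H"
  shows "f \<in> {..<(n::nat)} \<rightarrow> carrier G \<Longrightarrow> h (finprod G f {..<n}) = finprod H (\<lambda>i. h (f i)) {..<n}"
proof (induction n)
  case 0
  interpret G: comm_group G by (rule G)
  interpret H: comm_group H by (rule H)
  show ?case using h hom_one[of h G H] by simp
next
  case (Suc n)
  interpret G: comm_group G by (rule G)
  interpret H: comm_group H by (rule H)
  have f: "f \<in> {..<n} \<rightarrow> carrier G" "f n \<in> carrier G" using Suc.prems by auto
  have hf: "(\<lambda>i. h (f i)) \<in> {..<n} \<rightarrow> carrier H" "h (f n) \<in> carrier H"
    using f h by (auto simp: hom_def Pi_def)
  have "h (finprod G f {..<Suc n}) = h (f n \<otimes>\<^bsub>G\<^esub> finprod G f {..<n})"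
    using f by (simp add: lessThan_Suc)
  also have "\<dots> = h (f n) \<otimes>\<^bsub>H\<^esub> h (finprod G f {..<n})"
    using f h by (simp add: hom_mult)
  also have "\<dots> = h (f n) \<otimes>\<^bsub>H\<^esub> finprod H (\<lambda>i. h (f i)) {..<n}"
    using Suc.IH f by simp
  also have "\<dots> = finprod H (\<lambda>i. h (f i)) {..<Suc n}"
    using hf by (simp add: lessThan_Suc)
  finally show ?case .
qed

lemma MRS_transfer:
  assumes G: "comm_group G" and H: "comm_group H" and h: "h \<in> iso H G"
    and M: "MRS H a b c B \<omega> \<delta>"
  shows "MRS G a b c (\<lambda>k i j. h (B k i j)) (h \<omega>) (h \<delta>)"
proof -
  have hh: "h \<in> hom H G" using h by (simp add: iso_def)
  have bh: "bij_betw h (carrier H) (carrier G)" using h by (simp add: iso_def)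
  have bB: "bij_betw (\<lambda>(k, i, j). B k i j) ({..<c} \<times> {..<a} \<times> {..<b}) (carrier H)"
    using M by (simp add: MRS_def)
  have inC: "\<And>k i j. k < c \<Longrightarrow> i < a \<Longrightarrow> j < b \<Longrightarrow> B k i j \<in> carrier H"
    using bij_betw_apply[OF bB, of "(k, i, j)" for k i j] by auto
  have "bij_betw (h \<circ> (\<lambda>(k, i, j). B k i j)) ({..<c} \<times> {..<a} \<times> {..<b}) (carrier G)"
    using bB bh by (rule bij_betw_trans)
  moreover have "h \<circ> (\<lambda>(k, i, j). B k i j) = (\<lambda>(k, i, j). h (B k i j))" by auto
  ultimately have 1: "bij_betw (\<lambda>(k, i, j). h (B k i j)) ({..<c} \<times> {..<a} \<times> {..<b}) (carrier G)" by simp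
  have 2: "h \<omega> \<in> carrier G" "h \<delta> \<in> carrier G" using M hh by (auto simp: MRS_def hom_def)
  have 3: "\<forall>k<c. \<forall>i<a. finprod G (\<lambda>j. h (B k i j)) {..<b} = h \<omega>"
  proof (intro allI impI)
    fix k i assume "k < c" "i < a"
    then have "(\<lambda>j. B k i j) \<in> {..<b} \<rightarrow> carrier H" using inC by auto
    then have "h (finprod H (\<lambda>j. B k i j) {..<b}) = finprod G (\<lambda>j. h (B k i j)) {..<b}"
      using hom_finprod_lessThan[OF H G hh] by blast
    then show "finprod G (\<lambda>j. h (B k i j)) {..<b} = h \<omega>" using M \<open>k < c\<close> \<open>i < a\<close> by (simp add: MRS_def)
  qed
  have 4: "\<forall>k<c. \<forall>j<b. finprod G (\<lambda>i. h (B k i j)) {..<a} = h \<delta>"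
  proof (intro allI impI)
    fix k j assume "k < c" "j < b"
    then have "(\<lambda>i. B k i j) \<in> {..<a} \<rightarrow> carrier H" using inC by auto
    then have "h (finprod H (\<lambda>i. B k i j) {..<a}) = finprod G (\<lambda>i. h (B k i j)) {..<a}"
      using hom_finprod_lessThan[OF H G hh] by blast
    then show "finprod G (\<lambda>i. h (B k i j)) {..<a} = h \<delta>" using M \<open>k < c\<close> \<open>j < b\<close> by (simp add: MRS_def)
  qed
  show ?thesis using 1 2 3 4 by (simp add: MRS_def)
qed

lemma comm_group_DirProd:
  assumes "comm_group A" "comm_group B"
  shows "comm_group (A \<times>\<times> B)"
proof -
  interpret A: comm_group A by fact
  interpret B: comm_group B by fact
  have "group (A \<times>\<times> B)" by (simp add: DirProd_group A.group_axioms B.group_axioms)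
  then show ?thesis
    by (rule group.group_comm_groupI) (auto simp: A.m_comm B.m_comm)
qed

abbreviation "MG r \<equiv> integer_mod_group (2 * r) \<times>\<times> integer_mod_group 2 \<times>\<times> integer_mod_group 4"

lemma MG_comm: "comm_group (MG r)"
  by (intro comm_group_DirProd abelian_integer_mod_group)

lemma MG_finprod:
  assumes "r > 0"
  shows "finprod (MG r) (\<lambda>i. (f1 i mod (2 * int r), f2 i mod 2, f3 i mod 4)) {..<(n::nat)}
       = ((\<Sum>i<n. f1 i) mod (2 * int r), (\<Sum>i<n. f2 i) mod 2, (\<Sum>i<n. f3 i) mod 4)"
proof (induction n)
  case 0
  interpret M: comm_group "MG r" by (rule MG_comm)
  show ?case by simp
next
  case (Suc n)
  interpret M: comm_group "MG r" by (rule MG_comm)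
  have c: "(\<lambda>i. (f1 i mod (2 * int r), f2 i mod 2, f3 i mod 4)) \<in> {..<Suc n} \<rightarrow> carrier (MG r)"
    using assms by (auto simp: carrier_integer_mod_group)
  have "finprod (MG r) (\<lambda>i. (f1 i mod (2 * int r), f2 i mod 2, f3 i mod 4)) {..<Suc n}
     = (f1 n mod (2 * int r), f2 n mod 2, f3 n mod 4) \<otimes>\<^bsub>MG r\<^esub>
        finprod (MG r) (\<lambda>i. (f1 i mod (2 * int r), f2 i mod 2, f3 i mod 4)) {..<n}"
    using c by (simp add: lessThan_Suc Pi_def del: mult_DirProd)
  also have "\<dots> = ((\<Sum>i<Suc n. f1 i) mod (2 * int r), (\<Sum>i<Suc n. f2 i) mod 2, (\<Sum>i<Suc n. f3 i) mod 4)"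
    unfolding Suc.IH by (simp add: mod_add_eq add.commute)
  finally show ?case .
qed

definition lZ :: "(int \<times> int \<times> int) list" where
  "lZ = [(0,0,0), (0,0,2), (0,1,0), (0,1,2), (1,0,0), (1,0,2), (1,1,0), (1,1,2), (0,0,1), (0,0,3), (0,1,1), (0,1,3), (1,0,1), (1,0,3), (1,1,1), (1,1,3)]"

definition lP :: "(int \<times> int \<times> int) list" where
  "lP = [(1,0,1), (1,1,0), (0,1,3), (1,1,1), (0,1,0), (0,0,2), (1,0,0), (0,0,3), (0,0,0), (1,0,3), (0,0,1), (0,1,1), (0,1,2), (1,1,2), (1,0,2), (1,1,3)]"

definition lQ :: "(int \<times> int \<times> int) list" where
  "lQ = [(1,0,3), (1,1,2), (0,0,1), (1,0,1), (1,1,0), (1,0,0), (0,1,0), (1,1,3), (0,0,3), (1,0,2), (0,1,2), (0,0,0), (1,1,1), (0,1,3), (0,1,1), (0,0,2)]"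

definition lL :: "(int \<times> int \<times> int) list" where
  "lL = [(1,1,0), (0,1,1), (1,0,0), (0,1,2), (1,1,2), (0,1,0), (1,1,1), (0,0,0), (1,1,3), (0,1,3), (0,0,2), (1,0,3), (0,0,1), (0,0,3), (1,0,2), (1,0,1)]"

definition lN :: "(int \<times> int \<times> int) list" where
  "lN = [(1,1,0), (0,1,3), (1,0,0), (0,1,2), (1,1,2), (0,1,0), (1,1,3), (0,0,0), (1,1,1), (0,1,1), (0,0,2), (1,0,1), (0,0,3), (0,0,1), (1,0,2), (1,0,3)]"

lemma less16: "p < (16::nat) \<Longrightarrow> p = 0 \<or> p = 1 \<or> p = 2 \<or> p = 3 \<or> p = 4 \<or> p = 5 \<or> p = 6 \<or> p = 7 \<or> p = 8 \<or> p = 9 \<or> p = 10 \<or> p = 11 \<or> p = 12 \<or> p = 13 \<or> p = 14 \<or> p = 15"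
  by presburger

lemma all16: "(\<forall>p<(16::nat). P p) \<longleftrightarrow> P 0 \<and> P 1 \<and> P 2 \<and> P 3 \<and> P 4 \<and> P 5 \<and> P 6 \<and> P 7 \<and> P 8 \<and> P 9 \<and> P 10 \<and> P 11 \<and> P 12 \<and> P 13 \<and> P 14 \<and> P 15"
  using less16 by fastforce

lemma sum8: "(\<Sum>j<(8::nat). f j) = f 0 + f 1 + f 2 + f 3 + f 4 + f 5 + f 6 + f 7" for f :: "nat \<Rightarrow> int"
  by (simp add: numeral_eq_Suc lessThan_Suc)

definition lst :: "nat \<Rightarrow> nat \<Rightarrow> (int \<times> int \<times> int) list" where
  "lst r a = (if a = 0 then lZ else if a = 1 then lP else if a = r - 1 then lQ
              else if even a then lL else lN)"

definition cls :: "nat \<Rightarrow> nat \<Rightarrow> nat \<Rightarrow> nat" where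
  "cls r i j = (if j < 4 then i else (r - i) mod r)"

definition sa :: "nat \<Rightarrow> nat \<Rightarrow> int" where
  "sa i j = (if j < 4 then int i else - int i)"

definition hvc :: "nat \<Rightarrow> nat \<Rightarrow> nat \<Rightarrow> nat \<Rightarrow> int \<times> int \<times> int" where
  "hvc r k i j = lst r (cls r i j) ! (8 * k + j)"

definition XB :: "nat \<Rightarrow> nat \<Rightarrow> nat \<Rightarrow> nat \<Rightarrow> int \<times> int \<times> int" where
  "XB r k i j = ((sa i j * (int r + 1) + fst (hvc r k i j) * int r) mod (2 * int r),
                 fst (snd (hvc r k i j)) mod 2, snd (snd (hvc r k i j)) mod 4)"

definition nrm :: "int \<times> int \<times> int \<Rightarrow> int \<times> int \<times> int" where
  "nrm h = (fst h mod 2, fst (snd h) mod 2, snd (snd h) mod 4)"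

lemma lists_distinct:
  "distinct (map nrm lZ) \<and> length lZ = 16" "distinct (map nrm lP) \<and> length lP = 16"
  "distinct (map nrm lQ) \<and> length lQ = 16" "distinct (map nrm lL) \<and> length lL = 16"
  "distinct (map nrm lN) \<and> length lN = 16"
  by (simp_all add: nrm_def lZ_def lP_def lQ_def lL_def lN_def)

lemma lst_distinct: "distinct (map nrm (lst r a)) \<and> length (lst r a) = 16"
  unfolding lst_def using lists_distinct by auto

lemma lst_pair:
  assumes "odd r" "r \<ge> 3" "i < r"
  shows "(lst r i = lZ \<and> lst r ((r-i) mod r) = lZ) \<or> (lst r i = lP \<and> lst r ((r-i) mod r) = lQ)
       \<or> (lst r i = lQ \<and> lst r ((r-i) mod r) = lP) \<or> (lst r i = lL \<and> lst r ((r-i) mod r) = lN)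
       \<or> (lst r i = lN \<and> lst r ((r-i) mod r) = lL)"
proof -
  consider "i = 0" | "i = 1" | "i = r - 1" | "2 \<le> i \<and> i < r - 1" using assms by linarith
  then show ?thesis
  proof cases
    case 1 then show ?thesis by (simp add: lst_def)
  next
    case 2
    have "(r - i) mod r = r - 1" using 2 assms by simp
    moreover have "r - 1 \<noteq> 1" "r - 1 \<noteq> 0" using assms by auto
    ultimately show ?thesis using 2 by (simp add: lst_def)
  next
    case 3
    have "(r - i) mod r = 1" using 3 assms by simp
    moreover have "r - 1 \<noteq> 1" "r - 1 \<noteq> 0" using assms by auto
    ultimately show ?thesis using 3 by (simp add: lst_def)
  next
    case 4
    have a: "(r - i) mod r = r - i" using 4 assms by simp
    have b: "even (r - i) \<longleftrightarrow> odd i" using 4 assms by presburger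
    show ?thesis using 4 assms a b by (auto simp: lst_def)
  qed
qed

definition rowok :: "(int \<times> int \<times> int) list \<Rightarrow> (int \<times> int \<times> int) list \<Rightarrow> nat \<Rightarrow> bool" where
  "rowok U V k \<longleftrightarrow>
     (\<Sum>j<8. fst ((if j < 4 then U else V) ! (8*k+j))) mod 2 = 0 \<and>
     (\<Sum>j<8. fst (snd ((if j < 4 then U else V) ! (8*k+j)))) mod 2 = 0 \<and>
     (\<Sum>j<8. snd (snd ((if j < 4 then U else V) ! (8*k+j)))) mod 4 = 0"

lemma rowok_all:
  assumes "k < 2"
  shows "rowok lZ lZ k \<and> rowok lP lQ k \<and> rowok lQ lP k \<and> rowok lL lN k \<and> rowok lN lL k"
proof -
  have "k = 0 \<or> k = 1" using assms by auto
  then show ?thesis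
    by (elim disjE) (simp_all add: rowok_def sum8 lZ_def lP_def lQ_def lL_def lN_def)
qed

lemma colok:
  "\<forall>p<16. (fst (lZ!p) + fst (lP!p) + fst (lQ!p)) mod 2 = 0 \<and> (fst (lL!p) + fst (lN!p)) mod 2 = 0
     \<and> (fst (snd (lZ!p)) + fst (snd (lP!p)) + fst (snd (lQ!p))) mod 2 = 0
     \<and> (fst (snd (lL!p)) + fst (snd (lN!p))) mod 2 = 0
     \<and> (snd (snd (lZ!p)) + snd (snd (lP!p)) + snd (snd (lQ!p))) mod 4 = 0
     \<and> (snd (snd (lL!p)) + snd (snd (lN!p))) mod 4 = 0"
  unfolding all16 by (simp add: lZ_def lP_def lQ_def lL_def lN_def)

lemma row_sum:
  assumes "odd r" "r \<ge> 3" "k < 2" "i < r"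
  shows "finprod (MG r) (\<lambda>j. XB r k i j) {..<8} = (0, 0, 0)"
proof -
  have rpos: "r > 0" using assms by simp
  obtain U V where UV: "lst r i = U" "lst r ((r-i) mod r) = V" and ok: "rowok U V k"
    using lst_pair[OF assms(1,2,4)] rowok_all[OF assms(3)] by blast
  have h: "hvc r k i j = (if j < 4 then U else V) ! (8*k+j)" for j
    using UV by (simp add: hvc_def cls_def)
  have "finprod (MG r) (\<lambda>j. XB r k i j) {..<8} =
     ((\<Sum>j<8. sa i j * (int r + 1) + fst (hvc r k i j) * int r) mod (2 * int r),
      (\<Sum>j<8. fst (snd (hvc r k i j))) mod 2, (\<Sum>j<8. snd (snd (hvc r k i j))) mod 4)"
    unfolding XB_def by (rule MG_finprod[OF rpos])
  also have "(\<Sum>j<8. sa i j * (int r + 1) + fst (hvc r k i j) * int r)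
      = (\<Sum>j<8. sa i j) * (int r + 1) + (\<Sum>j<8. fst (hvc r k i j)) * int r"
    by (simp add: sum.distrib sum_distrib_right)
  also have "(\<Sum>j<(8::nat). sa i j) = 0" by (simp add: sum8 sa_def)
  finally have eq: "finprod (MG r) (\<lambda>j. XB r k i j) {..<8} =
     (((\<Sum>j<8. fst (hvc r k i j)) * int r) mod (2 * int r),
      (\<Sum>j<8. fst (snd (hvc r k i j))) mod 2, (\<Sum>j<8. snd (snd (hvc r k i j))) mod 4)" by simp
  have e: "(\<Sum>j<8. fst (hvc r k i j)) mod 2 = 0" "(\<Sum>j<8. fst (snd (hvc r k i j))) mod 2 = 0"
    "(\<Sum>j<8. snd (snd (hvc r k i j))) mod 4 = 0"
    using ok unfolding h rowok_def by auto
  obtain t where t: "(\<Sum>j<8. fst (hvc r k i j)) = 2 * t" using e(1) by auto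
  have "((\<Sum>j<8. fst (hvc r k i j)) * int r) mod (2 * int r) = 0" unfolding t by simp
  then show ?thesis using eq e by simp
qed

lemma sum_int_lessThan: "2 * (\<Sum>i<n. int i) = int n * (int n - 1)"
  by (induction n) (auto simp: algebra_simps)

lemma sum_mid:
  assumes "r = 2 * m + 3" "n \<le> m"
  shows "(\<Sum>i<2 + 2 * n. proj (lst r i ! p)) = proj (lZ ! p) + proj (lP ! p) + int n * (proj (lL ! p) + proj (lN ! p))"
  using assms(2)
proof (induction n)
  case 0
  have "lst r 0 = lZ" "lst r 1 = lP" by (simp_all add: lst_def)
  then show ?case by (simp add: numeral_2_eq_2)
next
  case (Suc n)
  have a: "lst r (2 + 2 * n) = lL" using assms Suc.prems by (simp add: lst_def)
  have b: "lst r (Suc (2 + 2 * n)) = lN" using assms Suc.prems by (simp add: lst_def)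
  have "{..<2 + 2 * Suc n} = insert (Suc (2 + 2 * n)) (insert (2 + 2 * n) {..<2 + 2 * n})" by auto
  then have "(\<Sum>i<2 + 2 * Suc n. proj (lst r i ! p)) =
      proj (lst r (Suc (2 + 2 * n)) ! p) + (proj (lst r (2 + 2 * n) ! p) + (\<Sum>i<2 + 2 * n. proj (lst r i ! p)))"
    by simp
  also have "\<dots> = proj (lN ! p) + (proj (lL ! p) + (\<Sum>i<2 + 2 * n. proj (lst r i ! p)))"
    by (simp only: a b)
  also have "\<dots> = proj (lN ! p) + (proj (lL ! p) + (proj (lZ ! p) + proj (lP ! p) + int n * (proj (lL ! p) + proj (lN ! p))))"
    by (simp only: Suc.IH[OF Suc_leD[OF Suc.prems]])
  also have "\<dots> = proj (lZ ! p) + proj (lP ! p) + int (Suc n) * (proj (lL ! p) + proj (lN ! p))"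
    by (simp add: algebra_simps)
  finally show ?case .
qed

lemma sum_all:
  assumes "r = 2 * m + 3"
  shows "(\<Sum>i<r. proj (lst r i ! p)) = proj (lZ ! p) + proj (lP ! p) + proj (lQ ! p) + int m * (proj (lL ! p) + proj (lN ! p))"
proof -
  have "{..<r} = insert (2 + 2 * m) {..<2 + 2 * m}" using assms by auto
  then have "(\<Sum>i<r. proj (lst r i ! p)) = proj (lst r (2 + 2 * m) ! p) + (\<Sum>i<2 + 2 * m. proj (lst r i ! p))"
    by simp
  moreover have "lst r (2 + 2 * m) = lQ" using assms by (simp add: lst_def)
  ultimately show ?thesis using sum_mid[OF assms order.refl, of proj p] by simp
qed

lemma invol_mod:
  fixes r a :: nat
  assumes "a < r"
  shows "(r - (r - a) mod r) mod r = a"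
proof (cases "a = 0")
  case False
  have "r - a < r" using False assms by (intro diff_less) auto
  then have "(r - a) mod r = r - a" by simp
  then show ?thesis using assms by simp
qed simp

lemma cls_reindex:
  fixes r :: nat
  assumes "r > 0"
  shows "(\<Sum>i<r. g ((r - i) mod r)) = (\<Sum>i<r. (g i :: int))"
  by (rule sum.reindex_bij_witness[where i = "\<lambda>i. (r - i) mod r" and j = "\<lambda>i. (r - i) mod r"])
     (use assms invol_mod in auto)

lemma col_sum:
  assumes "odd r" "r \<ge> 3" "k < 2" "j < 8"
  shows "finprod (MG r) (\<lambda>i. XB r k i j) {..<r} = (0, 0, 0)"
proof -
  have "r = 2 * ((r - 3) div 2) + 3" using assms(1,2) by presburger
  then obtain m where r: "r = 2 * m + 3" by blast
  have rpos: "r > 0" using assms by simp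
  define p where "p = 8 * k + j"
  have p: "p < 16" using assms unfolding p_def by simp
  have hs: "(\<Sum>i<r. proj (hvc r k i j)) = (\<Sum>i<r. proj (lst r i ! p))" for proj :: "int \<times> int \<times> int \<Rightarrow> int"
  proof (cases "j < 4")
    case True then show ?thesis by (simp add: hvc_def cls_def p_def)
  next
    case False
    then have "(\<Sum>i<r. proj (hvc r k i j)) = (\<Sum>i<r. (\<lambda>a. proj (lst r a ! p)) ((r - i) mod r))"
      by (simp add: hvc_def cls_def p_def)
    also have "\<dots> = (\<Sum>i<r. proj (lst r i ! p))" using cls_reindex[OF rpos, of "\<lambda>a. proj (lst r a ! p)"] by simp
    finally show ?thesis .
  qed
  have S: "(\<Sum>i<r. int i) = int r * (int m + 1)"
    using sum_int_lessThan[of r] unfolding r by (simp add: algebra_simps)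
  have sasum: "(\<Sum>i<r. sa i j) = int r * (int m + 1) \<or> (\<Sum>i<r. sa i j) = - (int r * (int m + 1))"
    using S by (cases "j < 4") (simp_all add: sa_def sum_negf)
  have "finprod (MG r) (\<lambda>i. XB r k i j) {..<r} =
     ((\<Sum>i<r. sa i j * (int r + 1) + fst (hvc r k i j) * int r) mod (2 * int r),
      (\<Sum>i<r. fst (snd (hvc r k i j))) mod 2, (\<Sum>i<r. snd (snd (hvc r k i j))) mod 4)"
    unfolding XB_def by (rule MG_finprod[OF rpos])
  also have "(\<Sum>i<r. sa i j * (int r + 1) + fst (hvc r k i j) * int r)
      = (\<Sum>i<r. sa i j) * (int r + 1) + (\<Sum>i<r. fst (hvc r k i j)) * int r"
    by (simp add: sum.distrib sum_distrib_right)
  finally have eq: "finprod (MG r) (\<lambda>i. XB r k i j) {..<r} =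
     (((\<Sum>i<r. sa i j) * (int r + 1) + (\<Sum>i<r. fst (hvc r k i j)) * int r) mod (2 * int r),
      (\<Sum>i<r. fst (snd (hvc r k i j))) mod 2, (\<Sum>i<r. snd (snd (hvc r k i j))) mod 4)" .
  have c: "(fst (lZ!p) + fst (lP!p) + fst (lQ!p)) mod 2 = 0" "(fst (lL!p) + fst (lN!p)) mod 2 = 0"
     "(fst (snd (lZ!p)) + fst (snd (lP!p)) + fst (snd (lQ!p))) mod 2 = 0"
     "(fst (snd (lL!p)) + fst (snd (lN!p))) mod 2 = 0"
     "(snd (snd (lZ!p)) + snd (snd (lP!p)) + snd (snd (lQ!p))) mod 4 = 0"
     "(snd (snd (lL!p)) + snd (snd (lN!p))) mod 4 = 0"
    using colok p by auto
  have modlemma: "(a + int m * b) mod n = 0" if "a mod n = 0" "b mod n = 0" for a b n :: int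
    using that by (simp add: mod_eq_0_iff_dvd)
  have E: "(\<Sum>i<r. fst (hvc r k i j)) mod 2 = 0"
    unfolding hs sum_all[OF r] by (rule modlemma) (use c in auto)
  have Y: "(\<Sum>i<r. fst (snd (hvc r k i j))) mod 2 = 0"
    unfolding hs[of "\<lambda>h. fst (snd h)"] sum_all[OF r, of "\<lambda>h. fst (snd h)"] by (rule modlemma) (use c in auto)
  have Zc: "(\<Sum>i<r. snd (snd (hvc r k i j))) mod 4 = 0"
    unfolding hs[of "\<lambda>h. snd (snd h)"] sum_all[OF r, of "\<lambda>h. snd (snd h)"] by (rule modlemma) (use c in auto)
  obtain t where t: "(\<Sum>i<r. fst (hvc r k i j)) = 2 * t" using E by auto
  have X: "((\<Sum>i<r. sa i j) * (int r + 1) + (\<Sum>i<r. fst (hvc r k i j)) * int r) mod (2 * int r) = 0"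
  proof -
    obtain sg :: int where sg: "(\<Sum>i<r. sa i j) = sg * (int r * (int m + 1))"
      using sasum by (metis mult_1 mult_minus1)
    have "int r + 1 = 2 * (int m + 2)" unfolding r by simp
    then have "(\<Sum>i<r. sa i j) * (int r + 1) + (\<Sum>i<r. fst (hvc r k i j)) * int r
        = (2 * int r) * (sg * (int m + 1) * (int m + 2) + t)"
      unfolding sg t by (simp add: algebra_simps)
    then show ?thesis by simp
  qed
  show ?thesis using eq X Y Zc by simp
qed

lemma cls_sa:
  assumes "i < r"
  shows "int r dvd (int (cls r i j) - sa i j)"
proof (cases "j < 4")
  case True then show ?thesis by (simp add: cls_def sa_def)
next
  case False
  show ?thesis
  proof (cases "i = 0")
    case True then show ?thesis using False by (simp add: cls_def sa_def)
  next
    case i: False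
    have "r - i < r" using i assms by (intro diff_less) auto
    then have "cls r i j = r - i" using False by (simp add: cls_def)
    then have "int (cls r i j) - sa i j = int r" using False assms by (simp add: sa_def of_nat_diff)
    then show ?thesis by simp
  qed
qed

lemma dvd_eq_nat:
  assumes "int r dvd (int c - int c')" "c < r" "c' < r"
  shows "c = c'"
proof -
  have "int c mod int r = int c' mod int r" using assms(1) by (simp add: mod_eq_dvd_iff)
  then show ?thesis using assms(2,3) by simp
qed

lemma cls_inj:
  assumes "i < r" "i' < r" "cls r i j = cls r i' j"
  shows "i = i'"
proof (cases "j < 4")
  case True then show ?thesis using assms by (simp add: cls_def)
next
  case False
  then have "(r - i) mod r = (r - i') mod r" using assms by (simp add: cls_def)
  then show ?thesis using invol_mod[OF assms(1)] invol_mod[OF assms(2)] by metis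
qed

lemma XB_inj:
  assumes "odd r" "r \<ge> 3" "k < 2" "i < r" "j < 8" "k' < 2" "i' < r" "j' < 8"
    and eq: "XB r k i j = XB r k' i' j'"
  shows "k = k' \<and> i = i' \<and> j = j'"
proof -
  have "r = 2 * ((r - 3) div 2) + 3" using assms(1,2) by presburger
  then obtain m where r: "r = 2 * m + 3" by blast
  define h where "h = hvc r k i j"
  define h' where "h' = hvc r k' i' j'"
  define D where "D = (sa i j * (int r + 1) + fst h * int r) - (sa i' j' * (int r + 1) + fst h' * int r)"
  from eq have x: "(sa i j * (int r + 1) + fst h * int r) mod (2 * int r) = (sa i' j' * (int r + 1) + fst h' * int r) mod (2 * int r)"
    and y: "fst (snd h) mod 2 = fst (snd h') mod 2" and z: "snd (snd h) mod 4 = snd (snd h') mod 4"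
    by (simp_all add: XB_def h_def h'_def)
  from x have d: "2 * int r dvd D" unfolding D_def by (simp add: mod_eq_dvd_iff)
  have D1: "D = 2 * ((sa i j - sa i' j') * (int m + 2) + (fst h - fst h') * (int m + 1)) + (fst h - fst h')"
    unfolding D_def r by (simp add: algebra_simps)
  have "2 dvd D" using d dvd_trans[of 2 "2 * int r" D] by simp
  then have "2 dvd (fst h - fst h')" unfolding D1 by (simp add: dvd_add_right_iff)
  then have e: "fst h mod 2 = fst h' mod 2" by (simp add: mod_eq_dvd_iff)
  have D2: "D = int r * ((sa i j - sa i' j') + (fst h - fst h')) + (sa i j - sa i' j')"
    unfolding D_def by (simp add: algebra_simps)
  have "int r dvd D" using d dvd_trans[of "int r" "2 * int r" D] by simp
  then have s: "int r dvd (sa i j - sa i' j')" unfolding D2 by (simp add: dvd_add_right_iff)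
  have "int (cls r i j) - int (cls r i' j') = (int (cls r i j) - sa i j) - (int (cls r i' j') - sa i' j') + (sa i j - sa i' j')"
    by simp
  also have "int r dvd \<dots>" by (rule dvd_add[OF dvd_diff[OF cls_sa[OF assms(4)] cls_sa[OF assms(7)]] s])
  finally have "int r dvd (int (cls r i j) - int (cls r i' j'))" .
  moreover have "cls r i j < r" "cls r i' j' < r" using assms by (auto simp: cls_def)
  ultimately have c: "cls r i j = cls r i' j'" by (rule dvd_eq_nat)
  define c0 where "c0 = cls r i j"
  have hh: "h = lst r c0 ! (8 * k + j)" "h' = lst r c0 ! (8 * k' + j')"
    unfolding h_def h'_def hvc_def c0_def c by simp_all
  have "nrm h = nrm h'" by (simp add: nrm_def e y z)
  moreover have l: "8 * k + j < 16" "8 * k' + j' < 16" using assms by auto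
  ultimately have "map nrm (lst r c0) ! (8 * k + j) = map nrm (lst r c0) ! (8 * k' + j')"
    using lst_distinct[of r c0] unfolding hh by simp
  moreover have "(map nrm (lst r c0) ! (8 * k + j) = map nrm (lst r c0) ! (8 * k' + j')) = (8 * k + j = 8 * k' + j')"
    by (rule nth_eq_iff_index_eq) (use lst_distinct[of r c0] l in auto)
  ultimately have "8 * k + j = 8 * k' + j'" by blast
  then have kj: "k = k'" "j = j'" using assms(5,8) by presburger+
  then have "i = i'" using cls_inj[OF assms(4,7)] c by simp
  then show ?thesis using kj by simp
qed

lemma MRS_MG:
  assumes "odd r" "r \<ge> 3"
  shows "MRS (MG r) r 8 2 (XB r) (0, 0, 0) (0, 0, 0)"
proof -
  have rpos: "r > 0" using assms by simp
  let ?f = "\<lambda>(k, i, j). XB r k i j"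
  let ?D = "{..<2::nat} \<times> {..<r} \<times> {..<8::nat}"
  have inj: "inj_on ?f ?D" using XB_inj[OF assms] by (auto simp: inj_on_def)
  have sub: "?f ` ?D \<subseteq> carrier (MG r)" using rpos by (auto simp: XB_def carrier_integer_mod_group)
  have fin: "finite (carrier (MG r))" using rpos by (simp add: carrier_integer_mod_group)
  have "card (?f ` ?D) = card ?D" by (rule card_image[OF inj])
  also have "\<dots> = card (carrier (MG r))" using rpos by (simp add: carrier_integer_mod_group card_cartesian_product)
  finally have "?f ` ?D = carrier (MG r)" using card_subset_eq[OF fin sub] by simp
  then have bij: "bij_betw ?f ?D (carrier (MG r))" using inj by (simp add: bij_betw_def)
  show ?thesis unfolding MRS_def using bij rpos row_sum[OF assms] col_sum[OF assms]
    by (auto simp: carrier_integer_mod_group)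
qed

theorem lemma4p9:
  fixes G :: "('g, 'm) monoid_scheme" and r :: nat
  assumes "odd r" and "r \<ge> 3"
    and "comm_group G"
    and "G \<cong> integer_mod_group (2 * r) \<times>\<times> integer_mod_group 2 \<times>\<times> integer_mod_group 4"
  shows "\<exists>A. MRS G r 8 2 A \<one>\<^bsub>G\<^esub> \<one>\<^bsub>G\<^esub>"
proof -
  interpret G: comm_group G by (rule assms(3))
  have M: "MRS (MG r) r 8 2 (XB r) (0, 0, 0) (0, 0, 0)" by (rule MRS_MG[OF assms(1,2)])
  from assms(4) obtain \<phi> where \<phi>: "\<phi> \<in> iso G (MG r)" by (auto simp: is_iso_def)
  have \<psi>: "inv_into (carrier G) \<phi> \<in> iso (MG r) G" by (rule G.iso_set_sym[OF \<phi>])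
  have grp: "group (MG r)" using MG_comm comm_group.axioms(2) by (metis comm_group_def)
  have one: "inv_into (carrier G) \<phi> (0, 0, 0) = \<one>\<^bsub>G\<^esub>"
    using hom_one[of "inv_into (carrier G) \<phi>" "MG r" G] \<psi> grp G.group_axioms by (simp add: iso_def)
  show ?thesis using MRS_transfer[OF assms(3) MG_comm \<psi> M] one by auto
qed



end
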